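(* Let $0\le r\le m$ and let $\mathbf v_r\in\mathrm{GF}(q^m)^r$ have rank $r$. The rank weight enumerator of $\mathcal L_r=\langle\mathbf v_r\rangle^\perp\subseteq\mathrm{GF}(q^m)^r$ depends only on $r$ and equals $$W^{\mathrm R}_{\mathcal L_r}(x,y)=q^{-m}\left\{\big[x+(q^m-1)y\big]^{[r]}+(q^m-1)(x-y)^{[r]}\right\}.$$
   Context: The rank of a vector over $\mathrm{GF}(q^m)$ is the maximum number of its coordinates linearly independent over $\mathrm{GF}(q)$. $\langle\mathbf v\rangle=\{a\mathbf v:a\in\mathrm{GF}(q^m)\}$ and $\perp$ denotes the dual with respect to the standard inner product $\sum_iu_iv_i$. The rank weight enumerator of a code $\mathcal C\subseteq\mathrm{GF}(q^m)^N$ is $\sum_{\mathbf u\in\mathcal C}y^{\mathrm{rk}(\mathbf u)}x^{N-\mathrm{rk}(\mathbf u)}$. $q$-product: for homogeneous polynomials $a(x,y;m)=\sum_{i=0}^r a_i(m)y^ix^{r-i}$ and $b(x,y;m)=\sum_{j=0}^s b_j(m)y^jx^{s-j}$ with coefficients real functions of $m$ (out-of-range coefficients zero), $a*b=\sum_{u=0}^{r+s}c_u(m)y^ux^{r+s-u}$ with $c_u(m)=\sum_{i=0}^u q^{is}a_i(m)b_{u-i}(m-i)$; $q$-powers: $a^{[0]}=1$, $a^{[n]}=a^{[n-1]}*a$. The polynomial $x+(q^m-1)y$ has coefficients $1$ and $q^m-1$, and $x-y$ has coefficients $1,-1$. *)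

theory Defs
  imports Complex_Main
begin

definition vecs :: "nat \<Rightarrow> (nat \<Rightarrow> 'a::zero) set" where
  "vecs N = {u. \<forall>i\<ge>N. u i = 0}"

definition is_subfield :: "'a::field set \<Rightarrow> bool" where
  "is_subfield K \<longleftrightarrow> 0 \<in> K \<and> 1 \<in> K \<and>
     (\<forall>a\<in>K. \<forall>b\<in>K. a + b \<in> K \<and> a * b \<in> K \<and> - a \<in> K) \<and>
     (\<forall>a\<in>K. a \<noteq> 0 \<longrightarrow> inverse a \<in> K)"

definition lin_indep_over :: "'a::field set \<Rightarrow> (nat \<Rightarrow> 'a) \<Rightarrow> nat set \<Rightarrow> bool" where
  "lin_indep_over K u S \<longleftrightarrow>
     (\<forall>c. (\<forall>i\<in>S. c i \<in> K) \<and> (\<Sum>i\<in>S. c i * u i) = 0 \<longrightarrow> (\<forall>i\<in>S. c i = 0))"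

definition rank_over :: "'a::field set \<Rightarrow> nat \<Rightarrow> (nat \<Rightarrow> 'a) \<Rightarrow> nat" where
  "rank_over K N u = Max (card ` {S. S \<subseteq> {..<N} \<and> lin_indep_over K u S})"

definition span1 :: "nat \<Rightarrow> (nat \<Rightarrow> 'a::field) \<Rightarrow> (nat \<Rightarrow> 'a) set" where
  "span1 N v = {(\<lambda>i. a * v i) | a. True}"

definition dual_code :: "nat \<Rightarrow> (nat \<Rightarrow> 'a::field) set \<Rightarrow> (nat \<Rightarrow> 'a) set" where
  "dual_code N C = {u \<in> vecs N. \<forall>c\<in>C. (\<Sum>i<N. u i * c i) = 0}"

definition rank_wt_enum :: "'a::field set \<Rightarrow> nat \<Rightarrow> (nat \<Rightarrow> 'a) set \<Rightarrow> real \<Rightarrow> real \<Rightarrow> real" where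
  "rank_wt_enum K N C x y = (\<Sum>u\<in>C. y ^ rank_over K N u * x ^ (N - rank_over K N u))"

text \<open>A homogeneous polynomial is a pair (degree, coefficients), the coefficient a i m being
  the coefficient of y^i x^(deg-i), a real function of m. Coefficients outside 0..deg count as zero.\<close>
type_synonym hpoly = "nat \<times> (nat \<Rightarrow> real \<Rightarrow> real)"

definition hcoeff :: "hpoly \<Rightarrow> nat \<Rightarrow> real \<Rightarrow> real" where
  "hcoeff a i m = (if i \<le> fst a then snd a i m else 0)"

definition heval :: "hpoly \<Rightarrow> real \<Rightarrow> real \<Rightarrow> real \<Rightarrow> real" where
  "heval a x y m = (\<Sum>i\<le>fst a. hcoeff a i m * y ^ i * x ^ (fst a - i))"

definition qprod :: "real \<Rightarrow> hpoly \<Rightarrow> hpoly \<Rightarrow> hpoly" where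
  "qprod q a b = (fst a + fst b,
     (\<lambda>u m. \<Sum>i\<le>u. q ^ (i * fst b) * hcoeff a i m * hcoeff b (u - i) (m - real i)))"

fun qpow :: "real \<Rightarrow> hpoly \<Rightarrow> nat \<Rightarrow> hpoly" where
  "qpow q a 0 = (0, (\<lambda>i m. if i = 0 then 1 else 0))"
| "qpow q a (Suc n) = qprod q (qpow q a n) a"

text \<open>x + (q^m - 1) y\<close>
definition hp_xqy :: "real \<Rightarrow> hpoly" where
  "hp_xqy q = (1, (\<lambda>i m. if i = 0 then 1 else if i = 1 then q powr m - 1 else 0))"

definition hp_xmy :: hpoly where
  "hp_xmy = (1, (\<lambda>i m. if i = 0 then 1 else if i = 1 then -1 else 0))"

end

theory Submission
  imports Defs "HOL-Library.FuncSet"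
begin


definition sp :: "'a::field set \<Rightarrow> nat set \<Rightarrow> (nat \<Rightarrow> 'a) \<Rightarrow> 'a set" where
  "sp K A u = {\<Sum>i\<in>A. c i * u i | c. \<forall>i\<in>A. c i \<in> K}"

definition KV :: "'a::field set \<Rightarrow> nat set \<Rightarrow> (nat \<Rightarrow> 'a) set" where
  "KV K A = {c. (\<forall>i\<in>A. c i \<in> K) \<and> (\<forall>i. i \<notin> A \<longrightarrow> c i = 0)}"

lemma sf_0: "is_subfield K \<Longrightarrow> 0 \<in> K" by (simp add: is_subfield_def)
lemma sf_1: "is_subfield K \<Longrightarrow> 1 \<in> K" by (simp add: is_subfield_def)
lemma sf_add: "is_subfield K \<Longrightarrow> a \<in> K \<Longrightarrow> b \<in> K \<Longrightarrow> a + b \<in> K" by (simp add: is_subfield_def)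
lemma sf_mult: "is_subfield K \<Longrightarrow> a \<in> K \<Longrightarrow> b \<in> K \<Longrightarrow> a * b \<in> K" by (simp add: is_subfield_def)
lemma sf_uminus: "is_subfield K \<Longrightarrow> a \<in> K \<Longrightarrow> - a \<in> K" by (simp add: is_subfield_def)
lemma sf_diff: "is_subfield K \<Longrightarrow> a \<in> K \<Longrightarrow> b \<in> K \<Longrightarrow> a - b \<in> K"
  using sf_add[of K a "-b"] sf_uminus[of K b] by simp
lemma sf_inverse: "is_subfield K \<Longrightarrow> a \<in> K \<Longrightarrow> inverse a \<in> K"
  by (cases "a = 0") (auto simp: is_subfield_def)
lemma sf_divide: "is_subfield K \<Longrightarrow> a \<in> K \<Longrightarrow> b \<in> K \<Longrightarrow> a / b \<in> K"
  by (simp add: divide_inverse sf_mult sf_inverse)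
lemma sf_sum: "is_subfield K \<Longrightarrow> (\<And>i. i \<in> A \<Longrightarrow> f i \<in> K) \<Longrightarrow> sum f A \<in> K"
  by (induction A rule: infinite_finite_induct) (auto simp: sf_0 sf_add)


lemma indep_subset:
  assumes sf: "is_subfield K" and H: "lin_indep_over K u S" and T: "T \<subseteq> S" and fS: "finite S"
  shows "lin_indep_over K u T"
  unfolding lin_indep_over_def
proof (intro allI impI ballI)
  fix c i assume c: "(\<forall>i\<in>T. c i \<in> K) \<and> (\<Sum>i\<in>T. c i * u i) = 0" and i: "i \<in> T"
  define c' where "c' = (\<lambda>i. if i \<in> T then c i else 0)"
  have "(\<Sum>i\<in>S. c' i * u i) = (\<Sum>i\<in>T. c' i * u i)"
    by (rule sum.mono_neutral_right) (use fS T in \<open>auto simp: c'_def\<close>)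
  also have "\<dots> = 0" using c by (simp add: c'_def)
  finally have "\<forall>i\<in>S. c' i = 0" using H c sf_0[OF sf] unfolding lin_indep_over_def
    by (metis c'_def)
  then have "c' i = 0" using i T by blast
  then show "c i = 0" using i by (simp add: c'_def)
qed

lemma indep_cong: "(\<And>i. i \<in> S \<Longrightarrow> u i = u' i) \<Longrightarrow> lin_indep_over K u S = lin_indep_over K u' S"
  unfolding lin_indep_over_def by (metis (no_types, lifting) sum.cong)

lemma indep_empty: "lin_indep_over K u {}"
  by (simp add: lin_indep_over_def)

lemma rank_cong: "(\<And>i. i < r \<Longrightarrow> u i = u' i) \<Longrightarrow> rank_over K r u = rank_over K r u'"
proof -
  assume h: "\<And>i. i < r \<Longrightarrow> u i = u' i"
  have "{S. S \<subseteq> {..<r} \<and> lin_indep_over K u S} = {S. S \<subseteq> {..<r} \<and> lin_indep_over K u' S}"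
    using indep_cong[of _ u u'] h by blast
  then show ?thesis by (simp add: rank_over_def)
qed

lemma rank_props:
  "\<exists>S. S \<subseteq> {..<r} \<and> lin_indep_over K u S \<and> card S = rank_over K r u"
  "S \<subseteq> {..<r} \<Longrightarrow> lin_indep_over K u S \<Longrightarrow> card S \<le> rank_over K r u"
proof -
  let ?F = "{S. S \<subseteq> {..<r} \<and> lin_indep_over K u S}"
  have fin: "finite (card ` ?F)" by simp
  have ne: "card ` ?F \<noteq> {}" using indep_empty[of K u] by blast
  show "\<exists>S. S \<subseteq> {..<r} \<and> lin_indep_over K u S \<and> card S = rank_over K r u"
    using Max_in[OF fin ne] unfolding rank_over_def by auto
  show "S \<subseteq> {..<r} \<Longrightarrow> lin_indep_over K u S \<Longrightarrow> card S \<le> rank_over K r u"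
    unfolding rank_over_def by (rule Max_ge[OF fin]) auto
qed

lemma rank_le: "rank_over K r u \<le> r"
  using rank_props(1)[of r K u] by (metis card_lessThan card_mono finite_lessThan)

lemma card_KV:
  assumes "finite A"
  shows "card (KV K A) = card K ^ card A"
proof -
  have "bij_betw (\<lambda>c. restrict c A) (KV K A) (PiE A (\<lambda>_. K))"
  proof (rule bij_betw_byWitness[where f' = "\<lambda>f i. if i \<in> A then f i else 0"])
    show "(\<lambda>c. restrict c A) ` KV K A \<subseteq> PiE A (\<lambda>_. K)" by (auto simp: KV_def)
    show "(\<lambda>f i. if i \<in> A then f i else 0) ` PiE A (\<lambda>_. K) \<subseteq> KV K A" by (auto simp: KV_def)
    show "\<forall>x \<in> KV K A. (\<lambda>i. if i \<in> A then restrict x A i else 0) = x"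
      by (auto simp: KV_def fun_eq_iff)
    show "\<forall>y \<in> PiE A (\<lambda>_. K). restrict (\<lambda>i. if i \<in> A then y i else 0) A = y"
      by (auto simp: PiE_def extensional_def fun_eq_iff)
  qed
  then have "card (KV K A) = card (PiE A (\<lambda>_. K))" by (rule bij_betw_same_card)
  also have "\<dots> = card K ^ card A" by (simp add: card_PiE assms)
  finally show ?thesis .
qed

lemma finite_KV: "finite A \<Longrightarrow> finite K \<Longrightarrow> finite (KV K A)"
proof -
  assume a: "finite A" "finite K"
  have "KV K A \<subseteq> (\<lambda>f i. if i \<in> A then f i else 0) ` PiE A (\<lambda>_. K)"
  proof
    fix c assume c: "c \<in> KV K A"
    then have "c = (\<lambda>i. if i \<in> A then (restrict c A) i else 0)" by (auto simp: KV_def fun_eq_iff)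
    moreover have "restrict c A \<in> PiE A (\<lambda>_. K)" using c by (auto simp: KV_def)
    ultimately show "c \<in> (\<lambda>f i. if i \<in> A then f i else 0) ` PiE A (\<lambda>_. K)" by blast
  qed
  then show ?thesis using a by (meson finite_PiE finite_imageI finite_subset)
qed


lemma sp_0: "is_subfield K \<Longrightarrow> 0 \<in> sp K A u"
  unfolding sp_def by (rule CollectI, rule exI[of _ "\<lambda>_. 0"]) (simp add: sf_0)

lemma sp_add: "is_subfield K \<Longrightarrow> x \<in> sp K A u \<Longrightarrow> y \<in> sp K A u \<Longrightarrow> x + y \<in> sp K A u"
  unfolding sp_def
proof clarify
  fix c d assume sf: "is_subfield K" and c: "\<forall>i\<in>A. c i \<in> K" and d: "\<forall>i\<in>A. d i \<in> K"
  show "\<exists>e. (\<Sum>i\<in>A. c i * u i) + (\<Sum>i\<in>A. d i * u i) = (\<Sum>i\<in>A. e i * u i) \<and> (\<forall>i\<in>A. e i \<in> K)"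
    by (rule exI[of _ "\<lambda>i. c i + d i"]) (simp add: sum.distrib distrib_right sf_add[OF sf] c d)
qed

lemma sp_smult: "is_subfield K \<Longrightarrow> a \<in> K \<Longrightarrow> x \<in> sp K A u \<Longrightarrow> a * x \<in> sp K A u"
  unfolding sp_def
proof clarify
  fix c assume sf: "is_subfield K" and a: "a \<in> K" and c: "\<forall>i\<in>A. c i \<in> K"
  show "\<exists>e. a * (\<Sum>i\<in>A. c i * u i) = (\<Sum>i\<in>A. e i * u i) \<and> (\<forall>i\<in>A. e i \<in> K)"
    by (rule exI[of _ "\<lambda>i. a * c i"]) (simp add: sum_distrib_left mult.assoc sf_mult[OF sf] a c)
qed

lemma sp_sum: "is_subfield K \<Longrightarrow> (\<And>i. i \<in> B \<Longrightarrow> f i \<in> sp K A u) \<Longrightarrow> sum f B \<in> sp K A u"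
  by (induction B rule: infinite_finite_induct) (auto simp: sp_0 sp_add)

lemma sp_elem: "is_subfield K \<Longrightarrow> finite A \<Longrightarrow> j \<in> A \<Longrightarrow> u j \<in> sp K A u"
  unfolding sp_def
proof (rule CollectI, rule exI[of _ "\<lambda>i. if i = j then 1 else 0"])
  assume sf: "is_subfield K" and A: "finite A" "j \<in> A"
  have "(\<Sum>i\<in>A. (if i = j then 1 else 0) * u i) = (\<Sum>i\<in>A. if i = j then u j else 0)"
    by (rule sum.cong) auto
  also have "\<dots> = u j" using A by simp
  finally have "(\<Sum>i\<in>A. (if i = j then 1 else 0) * u i) = u j" .
  then show "u j = (\<Sum>i\<in>A. (if i = j then 1 else 0) * u i) \<and> (\<forall>i\<in>A. (if i = j then 1 else 0) \<in> K)"
    using sf_0[OF sf] sf_1[OF sf] by simp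
qed

lemma sp_trans:
  assumes sf: "is_subfield K" and h: "\<And>i. i \<in> A \<Longrightarrow> u i \<in> sp K S u"
  shows "sp K A u \<subseteq> sp K S u"
proof
  fix x assume "x \<in> sp K A u"
  then obtain c where x: "x = (\<Sum>i\<in>A. c i * u i)" and c: "\<forall>i\<in>A. c i \<in> K" unfolding sp_def by blast
  show "x \<in> sp K S u" unfolding x
    by (rule sp_sum[OF sf]) (simp add: sp_smult[OF sf] c h)
qed

lemma sp_mono: "is_subfield K \<Longrightarrow> finite A \<Longrightarrow> S \<subseteq> A \<Longrightarrow> sp K S u \<subseteq> sp K A u"
  by (rule sp_trans) (auto intro: sp_elem)

lemma indep_insert:
  assumes sf: "is_subfield K" and fS: "finite S" and ind: "lin_indep_over K u S"
    and iS: "i \<notin> S" and nsp: "u i \<notin> sp K S u"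
  shows "lin_indep_over K u (insert i S)"
  unfolding lin_indep_over_def
proof (intro allI impI)
  fix c assume c: "(\<forall>j\<in>insert i S. c j \<in> K) \<and> (\<Sum>j\<in>insert i S. c j * u j) = 0"
  then have eq: "c i * u i + (\<Sum>j\<in>S. c j * u j) = 0" using fS iS by simp
  have ci: "c i = 0"
  proof (rule ccontr)
    assume ne: "c i \<noteq> 0"
    have "u i = (\<Sum>j\<in>S. (- c j / c i) * u j)"
    proof -
      have "u i = - (\<Sum>j\<in>S. c j * u j) / c i" using eq ne by (simp add: field_simps add_eq_0_iff)
      also have "\<dots> = (\<Sum>j\<in>S. (- c j / c i) * u j)"
        by (simp add: sum_divide_distrib sum_negf[symmetric])
      finally show ?thesis .
    qed
    moreover have "\<forall>j\<in>S. - c j / c i \<in> K" using c sf by (simp add: sf_divide sf_uminus)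
    ultimately have "u i \<in> sp K S u" unfolding sp_def
      by (intro CollectI exI[of _ "\<lambda>j. - c j / c i"]) simp
    then show False using nsp by simp
  qed
  then have "(\<forall>j\<in>S. c j \<in> K) \<and> (\<Sum>j\<in>S. c j * u j) = 0" using c eq by simp
  then have "\<forall>j\<in>S. c j = 0" using ind unfolding lin_indep_over_def by blast
  then show "\<forall>j\<in>insert i S. c j = 0" using ci by simp
qed

lemma span_max:
  assumes sf: "is_subfield K" and S: "S \<subseteq> {..<r}" "lin_indep_over K u S" "card S = rank_over K r u"
  shows "sp K {..<r} u = sp K S u"
proof
  have fS: "finite S" using S(1) finite_subset by blast
  show "sp K S u \<subseteq> sp K {..<r} u" by (rule sp_mono[OF sf]) (use S in auto)
  show "sp K {..<r} u \<subseteq> sp K S u"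
  proof (rule sp_trans[OF sf])
    fix i assume i: "i \<in> {..<r}"
    show "u i \<in> sp K S u"
    proof (cases "i \<in> S")
      case True then show ?thesis using sp_elem[OF sf fS] by blast
    next
      case False
      show ?thesis
      proof (rule ccontr)
        assume "u i \<notin> sp K S u"
        then have "lin_indep_over K u (insert i S)" using indep_insert[OF sf fS S(2) False] by blast
        then have "card (insert i S) \<le> rank_over K r u" using rank_props(2)[of "insert i S" r K u] S i by blast
        then show False using S(3) False fS by simp
      qed
    qed
  qed
qed

lemma card_sp_indep:
  assumes sf: "is_subfield K" and fK: "finite K" and fS: "finite S" and ind: "lin_indep_over K u S"
  shows "card (sp K S u) = card K ^ card S"
proof -
  have "bij_betw (\<lambda>c. \<Sum>i\<in>S. c i * u i) (KV K S) (sp K S u)"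
    unfolding bij_betw_def
  proof
    show "inj_on (\<lambda>c. \<Sum>i\<in>S. c i * u i) (KV K S)"
    proof (rule inj_onI)
      fix c d assume c: "c \<in> KV K S" and d: "d \<in> KV K S" and eq: "(\<Sum>i\<in>S. c i * u i) = (\<Sum>i\<in>S. d i * u i)"
      have "(\<Sum>i\<in>S. (c i - d i) * u i) = 0" using eq by (simp add: left_diff_distrib sum_subtractf)
      moreover have "\<forall>i\<in>S. c i - d i \<in> K" using c d sf by (auto simp: KV_def sf_diff)
      ultimately have "\<forall>i\<in>S. c i - d i = 0"
        using ind[unfolded lin_indep_over_def, rule_format, of "\<lambda>i. c i - d i"] by blast
      then show "c = d" using c d by (auto simp: KV_def fun_eq_iff)
    qed
    show "(\<lambda>c. \<Sum>i\<in>S. c i * u i) ` KV K S = sp K S u"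
    proof
      show "(\<lambda>c. \<Sum>i\<in>S. c i * u i) ` KV K S \<subseteq> sp K S u" by (auto simp: KV_def sp_def)
      show "sp K S u \<subseteq> (\<lambda>c. \<Sum>i\<in>S. c i * u i) ` KV K S"
      proof
        fix x assume "x \<in> sp K S u"
        then obtain c where x: "x = (\<Sum>i\<in>S. c i * u i)" and c: "\<forall>i\<in>S. c i \<in> K" unfolding sp_def by blast
        let ?c = "\<lambda>i. if i \<in> S then c i else 0"
        have "?c \<in> KV K S" using c by (simp add: KV_def)
        moreover have "x = (\<Sum>i\<in>S. ?c i * u i)" using x by simp
        ultimately show "x \<in> (\<lambda>c. \<Sum>i\<in>S. c i * u i) ` KV K S" by (rule rev_image_eqI[where x="?c"])
      qed
    qed
  qed
  then have "card (sp K S u) = card (KV K S)" by (simp add: bij_betw_same_card)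
  then show ?thesis using card_KV[OF fS] by simp
qed


lemma rank_mono_suc: "rank_over K r u \<le> rank_over K (Suc r) u"
proof -
  obtain S where S: "S \<subseteq> {..<r}" "lin_indep_over K u S" "card S = rank_over K r u"
    using rank_props(1) by blast
  moreover have "S \<subseteq> {..<Suc r}" using S(1) by auto
  ultimately show ?thesis using rank_props(2)[of S "Suc r" K u] by simp
qed

lemma rank_suc:
  assumes sf: "is_subfield K"
  shows "rank_over K (Suc r) u = rank_over K r u + (if u r \<in> sp K {..<r} u then 0 else 1)"
proof -
  obtain S0 where S0: "S0 \<subseteq> {..<r}" "lin_indep_over K u S0" "card S0 = rank_over K r u"
    using rank_props(1) by blast
  have fS0: "finite S0" using S0(1) finite_subset by blast
  have upper: "card S \<le> Suc (rank_over K r u)" if S: "S \<subseteq> {..<Suc r}" "lin_indep_over K u S" for S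
  proof -
    have fS: "finite S" using S(1) finite_subset by blast
    have "S - {r} \<subseteq> {..<r}" using S(1) by auto
    moreover have "lin_indep_over K u (S - {r})" using indep_subset[OF sf S(2) _ fS] by blast
    ultimately have "card (S - {r}) \<le> rank_over K r u" using rank_props(2) by blast
    moreover have "card S \<le> Suc (card (S - {r}))" using fS
      by (simp add: card_Diff_singleton_if) arith
    ultimately show ?thesis by linarith
  qed
  show ?thesis
  proof (cases "u r \<in> sp K {..<r} u")
    case False
    have "u r \<notin> sp K S0 u" using False sp_mono[OF sf _ S0(1), of u] by auto
    moreover have "r \<notin> S0" using S0(1) by auto
    ultimately have "lin_indep_over K u (insert r S0)" using indep_insert[OF sf fS0 S0(2)] by blast
    moreover have "insert r S0 \<subseteq> {..<Suc r}" using S0(1) by auto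
    ultimately have "card (insert r S0) \<le> rank_over K (Suc r) u" using rank_props(2) by blast
    then have "Suc (rank_over K r u) \<le> rank_over K (Suc r) u" using S0(3) fS0 \<open>r \<notin> S0\<close> by simp
    moreover obtain S1 where S1: "S1 \<subseteq> {..<Suc r}" "lin_indep_over K u S1" "card S1 = rank_over K (Suc r) u"
      using rank_props(1) by blast
    ultimately show ?thesis using upper[OF S1(1,2)] S1(3) False by simp
  next
    case True
    obtain S1 where S1: "S1 \<subseteq> {..<Suc r}" "lin_indep_over K u S1" "card S1 = rank_over K (Suc r) u"
      using rank_props(1) by blast
    have fS1: "finite S1" using S1(1) finite_subset by blast
    have "card S1 \<le> rank_over K r u"
    proof (cases "r \<in> S1")
      case False
      then have "S1 \<subseteq> {..<r}" using S1(1) by (auto simp: less_Suc_eq)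
      then show ?thesis using rank_props(2) S1(2) by blast
    next
      case rS1: True
      define T where "T = S1 - {r}"
      have fT: "finite T" using fS1 by (simp add: T_def)
      have indT: "lin_indep_over K u T" using indep_subset[OF sf S1(2) _ fS1] by (simp add: T_def)
      have TS: "T \<subseteq> {..<r}" using S1(1) by (auto simp: T_def less_Suc_eq)
      have S1eq: "S1 = insert r T" using rS1 by (auto simp: T_def)
      have rT: "r \<notin> T" by (simp add: T_def)
      have "\<exists>i<r. u i \<notin> sp K T u"
      proof (rule ccontr)
        assume "\<not> (\<exists>i<r. u i \<notin> sp K T u)"
        then have "sp K {..<r} u \<subseteq> sp K T u" using sp_trans[OF sf, of "{..<r}" u T] by auto
        then have "u r \<in> sp K T u" using True by blast
        then obtain c where c: "u r = (\<Sum>i\<in>T. c i * u i)" "\<forall>i\<in>T. c i \<in> K" unfolding sp_def by blast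
        define d where "d = (\<lambda>i. if i = r then -1 else c i)"
        have "(\<Sum>i\<in>S1. d i * u i) = d r * u r + (\<Sum>i\<in>T. d i * u i)"
          using S1eq fT rT by simp
        also have "(\<Sum>i\<in>T. d i * u i) = (\<Sum>i\<in>T. c i * u i)"
          by (rule sum.cong) (auto simp: d_def rT)
        finally have "(\<Sum>i\<in>S1. d i * u i) = 0" using c(1) by (simp add: d_def)
        moreover have "\<forall>i\<in>S1. d i \<in> K" using c(2) S1eq sf_uminus[OF sf sf_1[OF sf]]
          by (auto simp: d_def)
        ultimately have "\<forall>i\<in>S1. d i = 0" using S1(2) unfolding lin_indep_over_def by blast
        then show False using rS1 by (metis (mono_tags) d_def neg_equal_0_iff_equal one_neq_zero)
      qed
      then obtain i where i: "i < r" "u i \<notin> sp K T u" by blast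
      have iT: "i \<notin> T" using i(2) sp_elem[OF sf fT] by blast
      have "lin_indep_over K u (insert i T)" using indep_insert[OF sf fT indT iT i(2)] .
      moreover have "insert i T \<subseteq> {..<r}" using TS i(1) by auto
      ultimately have "card (insert i T) \<le> rank_over K r u" using rank_props(2) by blast
      moreover have "card (insert i T) = card S1" using S1eq iT rT fT by simp
      ultimately show ?thesis by simp
    qed
    then show ?thesis using S1(3) rank_mono_suc[of K r u] True by simp
  qed
qed

lemma card_sp_rank:
  assumes sf: "is_subfield K" and fK: "finite K"
  shows "card (sp K {..<r} u) = card K ^ rank_over K r u"
proof -
  obtain S where S: "S \<subseteq> {..<r}" "lin_indep_over K u S" "card S = rank_over K r u"
    using rank_props(1) by blast
  have fS: "finite S" using S(1) finite_subset by blast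
  show ?thesis using span_max[OF sf S] card_sp_indep[OF sf fK fS S(2)] S(3) by simp
qed

lemma fiber_card:
  assumes sf: "is_subfield K" and fK: "finite K" and t: "t \<in> sp K {..<r} u"
  shows "card {c \<in> KV K {..<r}. (\<Sum>i<r. c i * u i) = t} * card K ^ rank_over K r u = card K ^ r"
proof -
  let ?f = "\<lambda>c. \<Sum>i<r. c i * u i"
  let ?F = "\<lambda>t. {c \<in> KV K {..<r}. ?f c = t}"
  have fin: "finite (KV K {..<r})" using finite_KV[OF _ fK] by simp
  have finsp: "finite (sp K {..<r} u)"
  proof -
    have "sp K {..<r} u = ?f ` KV K {..<r}"
    proof
      show "sp K {..<r} u \<subseteq> ?f ` KV K {..<r}"
      proof
        fix x assume "x \<in> sp K {..<r} u"
        then obtain c where x: "x = ?f c" and c: "\<forall>i\<in>{..<r}. c i \<in> K" unfolding sp_def by blast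
        let ?c = "\<lambda>i. if i < r then c i else 0"
        have "?c \<in> KV K {..<r}" using c by (simp add: KV_def)
        moreover have "x = ?f ?c" using x by simp
        ultimately show "x \<in> ?f ` KV K {..<r}" by (rule rev_image_eqI[where x="?c"])
      qed
      show "?f ` KV K {..<r} \<subseteq> sp K {..<r} u" by (auto simp: KV_def sp_def)
    qed
    then show ?thesis using fin by simp
  qed
  have same: "card (?F s) = card (?F 0)" if s: "s \<in> sp K {..<r} u" for s
  proof -
    obtain c0 where c0: "s = ?f c0" "\<forall>i\<in>{..<r}. c0 i \<in> K" using s unfolding sp_def by blast
    define c1 where "c1 = (\<lambda>i. if i < r then c0 i else 0)"
    have c1: "c1 \<in> KV K {..<r}" "?f c1 = s" using c0 by (auto simp: KV_def c1_def)
    have "bij_betw (\<lambda>c i. c i - c1 i) (?F s) (?F 0)"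
    proof (rule bij_betw_byWitness[where f' = "\<lambda>c i. c i + c1 i"])
      show "\<forall>a\<in>?F s. (\<lambda>i. a i - c1 i + c1 i) = a" by simp
      show "\<forall>a\<in>?F 0. (\<lambda>i. a i + c1 i - c1 i) = a" by simp
      show "(\<lambda>c i. c i - c1 i) ` ?F s \<subseteq> ?F 0"
        using c1 by (auto simp: KV_def sf_diff[OF sf] left_diff_distrib sum_subtractf)
      show "(\<lambda>c i. c i + c1 i) ` ?F 0 \<subseteq> ?F s"
        using c1 by (auto simp: KV_def sf_add[OF sf] distrib_right sum.distrib)
    qed
    then show ?thesis by (rule bij_betw_same_card)
  qed
  have "card (KV K {..<r}) = (\<Sum>s\<in>sp K {..<r} u. card (?F s))"
  proof -
    have "card (KV K {..<r}) = (\<Sum>c\<in>KV K {..<r}. 1)" by simp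
    also have "\<dots> = (\<Sum>s\<in>sp K {..<r} u. \<Sum>c\<in>?F s. 1)"
      by (rule sum.group[symmetric, OF fin finsp]) (auto simp: KV_def sp_def)
    finally show ?thesis by simp
  qed
  also have "\<dots> = card (sp K {..<r} u) * card (?F 0)" using same by simp
  finally have "card K ^ r = card K ^ rank_over K r u * card (?F 0)"
    using card_KV[of "{..<r}" K] card_sp_rank[OF sf fK] by simp
  then show ?thesis using same[OF t] by (simp add: mult.commute)
qed



lemma fst_qpow: "fst a = 1 \<Longrightarrow> fst (qpow q a n) = n"
  by (induction n) (auto simp: qprod_def)

lemma hcoeff_qpow0: "hcoeff (qpow q a 0) u x = (if u = 0 then 1 else 0)"
  by (simp add: hcoeff_def)

lemma hcoeff_big: "fst a = 1 \<Longrightarrow> j \<ge> 2 \<Longrightarrow> hcoeff a j x = 0"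
  by (simp add: hcoeff_def)

lemma hcoeff_qpow_suc:
  assumes a1: "fst a = 1" and a0: "\<And>x. hcoeff a 0 x = 1"
  shows "hcoeff (qpow q a (Suc n)) u x = q ^ u * hcoeff (qpow q a n) u x +
     (if u = 0 then 0 else q ^ (u - 1) * hcoeff (qpow q a n) (u - 1) x * hcoeff a 1 (x - real (u - 1)))"
proof -
  let ?A = "qpow q a n"
  have fA: "fst ?A = n" using fst_qpow[OF a1] .
  let ?g = "\<lambda>i. q ^ (i * fst a) * hcoeff ?A i x * hcoeff a (u - i) (x - real i)"
  have big: "hcoeff ?A j x = 0" if "j > n" for j using that fA by (simp add: hcoeff_def)
  have sumeq: "(\<Sum>i\<le>u. ?g i) = q ^ u * hcoeff ?A u x +
     (if u = 0 then 0 else q ^ (u - 1) * hcoeff ?A (u - 1) x * hcoeff a 1 (x - real (u - 1)))"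
  proof (cases u)
    case 0 then show ?thesis using a0 a1 by simp
  next
    case (Suc k)
    have "(\<Sum>i\<le>u. ?g i) = ?g (Suc k) + ?g k + (\<Sum>i<k. ?g i)"
      unfolding Suc by (simp add: atMost_Suc lessThan_Suc_atMost[symmetric] lessThan_Suc)
    also have "(\<Sum>i<k. ?g i) = 0"
      by (rule sum.neutral) (use a1 Suc in \<open>auto simp: hcoeff_big\<close>)
    finally show ?thesis using a0 a1 Suc by simp
  qed
  have "hcoeff (qpow q a (Suc n)) u x = (if u \<le> n + 1 then (\<Sum>i\<le>u. ?g i) else 0)"
    by (simp add: hcoeff_def qprod_def fA a1)
  also have "\<dots> = q ^ u * hcoeff ?A u x +
     (if u = 0 then 0 else q ^ (u - 1) * hcoeff ?A (u - 1) x * hcoeff a 1 (x - real (u - 1)))"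
    using sumeq big[of u] big[of "u - 1"] by auto
  finally show ?thesis .
qed

lemma xqy_props: "fst (hp_xqy q) = 1" "hcoeff (hp_xqy q) 0 x = 1" "hcoeff (hp_xqy q) 1 x = q powr x - 1"
  by (simp_all add: hp_xqy_def hcoeff_def)

lemma xmy_props: "fst hp_xmy = 1" "hcoeff hp_xmy 0 x = 1" "hcoeff hp_xmy 1 x = - 1"
  by (simp_all add: hp_xmy_def hcoeff_def)



definition Nh :: "nat \<Rightarrow> nat \<Rightarrow> nat \<Rightarrow> nat \<Rightarrow> real" where
  "Nh q m r w = hcoeff (qpow (real q) (hp_xqy (real q)) r) w (real m)"
definition Eh :: "nat \<Rightarrow> nat \<Rightarrow> nat \<Rightarrow> nat \<Rightarrow> real" where
  "Eh q m r w = hcoeff (qpow (real q) hp_xmy r) w (real m)"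
definition Xf :: "nat \<Rightarrow> nat \<Rightarrow> nat \<Rightarrow> nat \<Rightarrow> bool \<Rightarrow> real" where
  "Xf q m r w z = (if z then (Nh q m r w + (real q ^ m - 1) * Eh q m r w) / real q ^ m
                   else (Nh q m r w - Eh q m r w) / real q ^ m)"

lemma Nh_rec: "q > 0 \<Longrightarrow> Nh q m (Suc r) w = real q ^ w * Nh q m r w +
   (if w = 0 then 0 else (real q ^ m - real q ^ (w - 1)) * Nh q m r (w - 1))"
proof -
  assume q: "q > 0"
  have pw: "real q ^ k * (real q powr (real m - real k) - 1) = real q ^ m - real q ^ k" for k
    using q by (simp add: powr_diff powr_realpow right_diff_distrib)
  show ?thesis
  proof (cases w)
    case (Suc k)
    then show ?thesis unfolding Nh_def hcoeff_qpow_suc[OF xqy_props(1) xqy_props(2)] xqy_props(3)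
      using pw[of k] by (simp add: algebra_simps)
  next
    case 0
    then show ?thesis unfolding Nh_def hcoeff_qpow_suc[OF xqy_props(1) xqy_props(2)] by simp
  qed
qed

lemma Eh_rec: "Eh q m (Suc r) w = real q ^ w * Eh q m r w +
   (if w = 0 then 0 else - (real q ^ (w - 1) * Eh q m r (w - 1)))"
  unfolding Eh_def hcoeff_qpow_suc[OF xmy_props(1) xmy_props(2)] xmy_props(3) by simp

lemma X_sum: "q > 0 \<Longrightarrow> Xf q m r w True + (real q ^ m - 1) * Xf q m r w False = Nh q m r w"
  by (simp add: Xf_def field_simps)

lemma X_rec: "q > 0 \<Longrightarrow> Xf q m (Suc r) w z = real q ^ w * Xf q m r w z +
   (if w = 0 then 0 else Nh q m r (w - 1) - real q ^ (w - 1) * Xf q m r (w - 1) z)"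
  unfolding Xf_def Nh_rec Eh_rec by (simp add: field_simps)

lemma X_base: "q > 0 \<Longrightarrow> Xf q m 0 w z = (if w = 0 \<and> z then 1 else 0)"
  by (simp add: Xf_def Nh_def Eh_def hcoeff_def)



definition sv :: "nat \<Rightarrow> (nat \<Rightarrow> 'a::field) \<Rightarrow> (nat \<Rightarrow> 'a) \<Rightarrow> 'a" where
  "sv r v u = (\<Sum>i<r. u i * v i)"

definition Gc :: "'a::field set \<Rightarrow> nat \<Rightarrow> (nat \<Rightarrow> 'a) \<Rightarrow> nat \<Rightarrow> 'a \<Rightarrow> nat" where
  "Gc K r v w b = card {u \<in> vecs r. rank_over K r u = w \<and> sv r v u = b}"

lemma vecs_KV: "vecs r = KV UNIV {..<r}"
  by (auto simp: vecs_def KV_def)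

lemma finite_vecs: "finite (vecs r :: (nat \<Rightarrow> 'a::{zero,finite}) set)"
proof -
  have "vecs r \<subseteq> (\<lambda>f i. if i \<in> {..<r} then f i else (0::'a)) ` PiE {..<r} (\<lambda>_. UNIV)"
  proof
    fix c :: "nat \<Rightarrow> 'a" assume c: "c \<in> vecs r"
    then have "c = (\<lambda>i. if i \<in> {..<r} then (restrict c {..<r}) i else 0)" by (auto simp: vecs_def fun_eq_iff)
    moreover have "restrict c {..<r} \<in> PiE {..<r} (\<lambda>_. UNIV)" by auto
    ultimately show "c \<in> (\<lambda>f i. if i \<in> {..<r} then f i else 0) ` PiE {..<r} (\<lambda>_. UNIV)" by blast
  qed
  then show ?thesis by (meson finite_PiE finite_imageI finite_subset finite_lessThan finite)
qed

lemma card_filter_sum: "finite A \<Longrightarrow> card {x\<in>A. P x} = (\<Sum>x\<in>A. if P x then 1 else 0)"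
  by (simp add: sum.If_cases Int_def)

lemma sp_cong: "(\<And>i. i \<in> A \<Longrightarrow> u i = u' i) \<Longrightarrow> sp K A u = sp K A u'"
  unfolding sp_def by (metis (no_types, lifting) sum.cong)

lemma rank_upd:
  assumes sf: "is_subfield K" and u: "u \<in> vecs r"
  shows "rank_over K (Suc r) (u(r := t)) = rank_over K r u + (if t \<in> sp K {..<r} u then 0 else 1)"
proof -
  have "rank_over K r (u(r := t)) = rank_over K r u" by (rule rank_cong) simp
  moreover have "sp K {..<r} (u(r := t)) = sp K {..<r} u" by (rule sp_cong) simp
  ultimately show ?thesis using rank_suc[OF sf, of r "u(r := t)"] by simp
qed

lemma sv_upd: "sv (Suc r) v (u(r := t)) = sv r v u + t * v r"
proof -
  have "(\<Sum>i<r. (u(r := t)) i * v i) = (\<Sum>i<r. u i * v i)" by (rule sum.cong) auto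
  then show ?thesis by (simp add: sv_def)
qed

lemma card_suc:
  fixes P :: "(nat \<Rightarrow> 'a::{zero,finite}) \<Rightarrow> bool"
  shows "card {u \<in> vecs (Suc r). P u} = (\<Sum>u'\<in>vecs r. card {t. P (u'(r := t))})"
proof -
  let ?S = "Sigma (vecs r) (\<lambda>u'. {t. P (u'(r := t))})"
  have "bij_betw (\<lambda>(u', t). u'(r := t)) ?S {u \<in> vecs (Suc r). P u}"
  proof (rule bij_betw_byWitness[where f' = "\<lambda>u. (u(r := 0), u r)"])
    show "\<forall>a\<in>?S. (\<lambda>u. (u(r := 0), u r)) ((\<lambda>(u', t). u'(r := t)) a) = a"
      by (auto simp: vecs_def fun_eq_iff)
    show "\<forall>a\<in>{u \<in> vecs (Suc r). P u}. (\<lambda>(u', t). u'(r := t)) ((\<lambda>u. (u(r := 0), u r)) a) = a"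
      by auto
    show "(\<lambda>(u', t). u'(r := t)) ` ?S \<subseteq> {u \<in> vecs (Suc r). P u}"
      by (auto simp: vecs_def)
    show "(\<lambda>u. (u(r := 0), u r)) ` {u \<in> vecs (Suc r). P u} \<subseteq> ?S"
      by (auto simp: vecs_def)
  qed
  then have "card {u \<in> vecs (Suc r). P u} = card ?S" by (simp add: bij_betw_same_card)
  also have "\<dots> = (\<Sum>u'\<in>vecs r. card {t. P (u'(r := t))})"
    by (rule card_SigmaI) (simp_all add: finite_vecs)
  finally show ?thesis .
qed



lemma indep_shift:
  assumes sf: "is_subfield K" and v: "lin_indep_over K v {..<Suc r}" and c: "c \<in> KV K {..<r}"
  shows "lin_indep_over K (\<lambda>i. v i + c i * v r) {..<r}"
  unfolding lin_indep_over_def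
proof (intro allI impI)
  fix d assume d: "(\<forall>i\<in>{..<r}. d i \<in> K) \<and> (\<Sum>i\<in>{..<r}. d i * (v i + c i * v r)) = 0"
  define d' where "d' = (\<lambda>i. if i = r then (\<Sum>j<r. d j * c j) else d i)"
  have "(\<Sum>i\<in>{..<Suc r}. d' i * v i) = (\<Sum>i<r. d' i * v i) + d' r * v r" by simp
  also have "(\<Sum>i<r. d' i * v i) = (\<Sum>i<r. d i * v i)" by (rule sum.cong) (auto simp: d'_def)
  also have "d' r * v r = (\<Sum>i<r. d i * (c i * v r))"
    by (simp add: d'_def sum_distrib_right mult.assoc)
  finally have "(\<Sum>i\<in>{..<Suc r}. d' i * v i) = (\<Sum>i\<in>{..<r}. d i * (v i + c i * v r))"
    by (simp add: distrib_left sum.distrib)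
  then have "(\<Sum>i\<in>{..<Suc r}. d' i * v i) = 0" using d by simp
  moreover have "\<forall>i\<in>{..<Suc r}. d' i \<in> K"
    using d c sf by (auto simp: d'_def KV_def intro!: sf_sum sf_mult)
  ultimately have H: "\<forall>i\<in>{..<Suc r}. d' i = 0" using v unfolding lin_indep_over_def by blast
  show "\<forall>i\<in>{..<r}. d i = 0"
  proof
    fix i assume "i \<in> {..<r}"
    then have "i \<in> {..<Suc r}" "i \<noteq> r" by auto
    with H have "d' i = 0" by blast
    with \<open>i \<noteq> r\<close> show "d i = 0" by (simp add: d'_def)
  qed
qed

lemma real_card_filter: "finite A \<Longrightarrow> real (card {x\<in>A. P x}) = (\<Sum>x\<in>A. if P x then 1 else 0)"
  by (simp add: card_filter_sum of_nat_sum if_distrib cong: if_cong)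

lemma vr_nz:
  assumes sf: "is_subfield K" and v: "lin_indep_over K v {..<Suc r}"
  shows "v r \<noteq> 0"
proof
  assume vr: "v r = 0"
  let ?d = "\<lambda>i. if i = r then 1 else (0::'a)"
  have "(\<Sum>i\<in>{..<Suc r}. ?d i * v i) = 0" using vr by (simp add: if_distrib cong: if_cong)
  moreover have "\<forall>i\<in>{..<Suc r}. ?d i \<in> K" using sf_0[OF sf] sf_1[OF sf] by auto
  ultimately have "\<forall>i\<in>{..<Suc r}. ?d i = 0" using v[unfolded lin_indep_over_def, rule_format, of ?d] by blast
  then have "?d r = 0" by blast
  then show False by simp
qed

context
  fixes K :: "'a::{field,finite} set" and q m :: nat
  assumes sf: "is_subfield K" and cK: "card K = q" and cU: "card (UNIV::'a set) = q ^ m"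
begin

lemma q_pos: "q > 0"
  using cK sf_0[OF sf] by (metis card_gt_0_iff empty_iff finite)

lemma Tsum:
  assumes v: "lin_indep_over K v {..<Suc r}"
    and IH: "\<forall>v'. lin_indep_over K v' {..<r} \<longrightarrow> (\<forall>w b. real (Gc K r v' w b) = Xf q m r w (b = 0))"
  shows "(\<Sum>u'\<in>{u'\<in>vecs r. rank_over K r u' = w}.
           real (card {t \<in> sp K {..<r} u'. sv r v u' + t * v r = b})) = real q ^ w * Xf q m r w (b = 0)"
proof -
  let ?V = "{u'\<in>vecs r. rank_over K r u' = w}"
  let ?f = "\<lambda>u' c. \<Sum>i<r. c i * u' i"
  let ?E = "\<lambda>u' t. sv r v u' + t * v r = b"
  let ?X = "Xf q m r w (b = 0)"
  have finKV: "finite (KV K {..<r})" using finite_KV[of "{..<r}" K] by simp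
  have finV: "finite ?V" by (rule finite_subset[OF _ finite_vecs[of r]]) auto
  have qpos: "real q > 0" using q_pos by simp
  have A: "(\<Sum>c\<in>KV K {..<r}. real (Gc K r (\<lambda>i. v i + c i * v r) w b)) = real q ^ r * ?X"
  proof -
    have "(\<Sum>c\<in>KV K {..<r}. real (Gc K r (\<lambda>i. v i + c i * v r) w b)) = (\<Sum>c\<in>KV K {..<r}. ?X)"
      using IH indep_shift[OF sf v] by (intro sum.cong) auto
    also have "\<dots> = real q ^ r * ?X" using card_KV[of "{..<r}" K] cK by simp
    finally show ?thesis .
  qed
  have B: "Gc K r (\<lambda>i. v i + c i * v r) w b = card {u' \<in> ?V. ?E u' (?f u' c)}" for c
  proof -
    have "sv r (\<lambda>i. v i + c i * v r) u' = sv r v u' + ?f u' c * v r" for u'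
    proof -
      have "sv r (\<lambda>i. v i + c i * v r) u' = sv r v u' + (\<Sum>i<r. u' i * (c i * v r))"
        by (simp add: sv_def distrib_left sum.distrib)
      also have "(\<Sum>i<r. u' i * (c i * v r)) = ?f u' c * v r" by (simp add: sum_distrib_right sum_distrib_left mult_ac)
      finally show ?thesis .
    qed
    then show ?thesis unfolding Gc_def by (intro arg_cong[where f=card]) auto
  qed
  have C: "(\<Sum>c\<in>KV K {..<r}. real (card {u' \<in> ?V. ?E u' (?f u' c)}))
         = (\<Sum>u'\<in>?V. real (card {c \<in> KV K {..<r}. ?E u' (?f u' c)}))"
  proof -
    have "(\<Sum>c\<in>KV K {..<r}. real (card {u' \<in> ?V. ?E u' (?f u' c)}))
        = (\<Sum>c\<in>KV K {..<r}. \<Sum>u'\<in>?V. if ?E u' (?f u' c) then 1 else 0)"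
      by (intro sum.cong refl real_card_filter[OF finV])
    also have "\<dots> = (\<Sum>u'\<in>?V. \<Sum>c\<in>KV K {..<r}. if ?E u' (?f u' c) then 1 else 0)"
      by (rule sum.swap)
    also have "\<dots> = (\<Sum>u'\<in>?V. real (card {c \<in> KV K {..<r}. ?E u' (?f u' c)}))"
      by (intro sum.cong refl real_card_filter[OF finKV, symmetric])
    finally show ?thesis .
  qed
  have Dd: "real (card {c \<in> KV K {..<r}. ?E u' (?f u' c)})
          = real (card {t \<in> sp K {..<r} u'. ?E u' t}) * real q ^ r / real q ^ w" if u': "u' \<in> ?V" for u'
  proof -
    let ?S = "{c \<in> KV K {..<r}. ?E u' (?f u' c)}"
    let ?T = "{t \<in> sp K {..<r} u'. ?E u' t}"
    have finS: "finite ?S" using finKV by simp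
    have finT: "finite ?T" by simp
    have img: "?f u' ` ?S \<subseteq> ?T" by (auto simp: KV_def sp_def)
    have "card ?S = (\<Sum>c\<in>?S. 1)" by simp
    also have "\<dots> = (\<Sum>t\<in>?T. \<Sum>c\<in>{c \<in> ?S. ?f u' c = t}. 1)"
      by (rule sum.group[symmetric, OF finS finT img])
    also have "\<dots> = (\<Sum>t\<in>?T. card {c \<in> KV K {..<r}. ?f u' c = t})"
      by (intro sum.cong) (auto intro!: arg_cong[where f=card])
    finally have "real (card ?S) = (\<Sum>t\<in>?T. real (card {c \<in> KV K {..<r}. ?f u' c = t}))"
      by (simp add: of_nat_sum)
    also have "\<dots> = (\<Sum>t\<in>?T. real q ^ r / real q ^ w)"
    proof (intro sum.cong refl)
      fix t assume "t \<in> ?T"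
      then have "t \<in> sp K {..<r} u'" by simp
      from fiber_card[OF sf _ this] have
        "card {c \<in> KV K {..<r}. ?f u' c = t} * q ^ w = q ^ r" using u' cK by simp
      then have "real (card {c \<in> KV K {..<r}. ?f u' c = t} * q ^ w) = real (q ^ r)"
        by (rule arg_cong)
      then have "real (card {c \<in> KV K {..<r}. ?f u' c = t}) * real q ^ w = real q ^ r"
        by simp
      then show "real (card {c \<in> KV K {..<r}. ?f u' c = t}) = real q ^ r / real q ^ w"
        using qpos by (simp add: field_simps)
    qed
    also have "\<dots> = real (card ?T) * real q ^ r / real q ^ w" by simp
    finally show ?thesis .
  qed
  have "real q ^ r * ?X = (\<Sum>u'\<in>?V. real (card {t \<in> sp K {..<r} u'. ?E u' t}) * real q ^ r / real q ^ w)"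
  proof -
    have "real q ^ r * ?X = (\<Sum>c\<in>KV K {..<r}. real (card {u' \<in> ?V. ?E u' (?f u' c)}))"
      using A B by simp
    also have "\<dots> = (\<Sum>u'\<in>?V. real (card {c \<in> KV K {..<r}. ?E u' (?f u' c)}))" by (rule C)
    also have "\<dots> = (\<Sum>u'\<in>?V. real (card {t \<in> sp K {..<r} u'. ?E u' t}) * real q ^ r / real q ^ w)"
      by (rule sum.cong[OF refl], rule Dd)
    finally show ?thesis .
  qed
  also have "\<dots> = (\<Sum>u'\<in>?V. real (card {t \<in> sp K {..<r} u'. ?E u' t})) * real q ^ r / real q ^ w"
    by (simp add: sum_divide_distrib sum_distrib_right)
  finally show ?thesis using qpos by (simp add: field_simps)
qed


lemma cardV:
  assumes G: "\<And>w b. real (Gc K r v w b) = Xf q m r w (b = 0)"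
  shows "real (card {u \<in> vecs r. rank_over K r u = w}) = Nh q m r w"
proof -
  let ?V = "{u \<in> vecs r. rank_over K r u = w}"
  have finV: "finite ?V" by (rule finite_subset[OF _ finite_vecs[of r]]) auto
  have "card ?V = (\<Sum>u\<in>?V. 1)" by simp
  also have "\<dots> = (\<Sum>b'\<in>(UNIV::'a set). \<Sum>u\<in>{u \<in> ?V. sv r v u = b'}. 1)"
    by (rule sum.group[symmetric, OF finV]) auto
  also have "\<dots> = (\<Sum>b'\<in>(UNIV::'a set). Gc K r v w b')"
    unfolding Gc_def by (intro sum.cong refl) (auto intro!: arg_cong[where f=card])
  finally have "real (card ?V) = (\<Sum>b'\<in>(UNIV::'a set). real (Gc K r v w b'))" by (simp add: of_nat_sum)
  also have "\<dots> = (\<Sum>b'\<in>(UNIV::'a set). Xf q m r w (b' = 0))" using G by simp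
  also have "\<dots> = Xf q m r w True + (\<Sum>b'\<in>(UNIV::'a set) - {0}. Xf q m r w (b' = 0))"
    by (subst sum.remove[of UNIV 0]) simp_all
  also have "(\<Sum>b'\<in>(UNIV::'a set) - {0}. Xf q m r w (b' = 0)) = (\<Sum>b'\<in>(UNIV::'a set) - {0}. Xf q m r w False)"
    by (rule sum.cong) auto
  also have "\<dots> = real (q ^ m - 1) * Xf q m r w False"
    using cU by (simp add: card_Diff_singleton)
  also have "real (q ^ m - 1) = real q ^ m - 1"
  proof -
    have "q ^ m \<ge> 1" using q_pos by simp
    then show ?thesis by (simp add: of_nat_diff)
  qed
  finally show ?thesis using X_sum[OF q_pos] by simp
qed

lemma term_split:
  assumes vr: "v r \<noteq> 0"
  shows "real (card {t. rank_over K r u' + (if t \<in> sp K {..<r} u' then 0 else 1) = w \<and> sv r v u' + t * v r = b})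
    = (if rank_over K r u' = w then real (card {t \<in> sp K {..<r} u'. sv r v u' + t * v r = b}) else 0)
    + (if rank_over K r u' + 1 = w then 1 - real (card {t \<in> sp K {..<r} u'. sv r v u' + t * v r = b}) else 0)"
proof -
  let ?E = "\<lambda>t. sv r v u' + t * v r = b"
  let ?T = "{t \<in> sp K {..<r} u'. ?E t}"
  have Eone: "{t. ?E t} = {(b - sv r v u') / v r}"
    using vr by (auto simp: field_simps)
  consider "rank_over K r u' = w" | "rank_over K r u' + 1 = w" | "rank_over K r u' \<noteq> w \<and> rank_over K r u' + 1 \<noteq> w"
    by blast
  then show ?thesis
  proof cases
    case 1
    then have "{t. rank_over K r u' + (if t \<in> sp K {..<r} u' then 0 else 1) = w \<and> ?E t} = ?T" by auto
    then show ?thesis using 1 by simp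
  next
    case 2
    then have "{t. rank_over K r u' + (if t \<in> sp K {..<r} u' then 0 else 1) = w \<and> ?E t} = {t. ?E t} - ?T"
      by auto
    moreover have "?T \<subseteq> {t. ?E t}" by auto
    moreover have "card {t. ?E t} = 1" using Eone by simp
    moreover have "card ?T \<le> card {t. ?E t}"
    proof (rule card_mono)
      show "finite {t. ?E t}" using Eone by simp
    qed auto
    moreover have "finite ?T" by simp
    ultimately have "real (card {t. rank_over K r u' + (if t \<in> sp K {..<r} u' then 0 else 1) = w \<and> ?E t})
       = 1 - real (card ?T)"
      by (simp add: card_Diff_subset card_mono of_nat_diff)
    then show ?thesis using 2 by simp
  next
    case 3
    then have "{t. rank_over K r u' + (if t \<in> sp K {..<r} u' then 0 else 1) = w \<and> ?E t} = {}" by auto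
    then show ?thesis using 3 by simp
  qed
qed

lemma Gc_main: "\<forall>v. lin_indep_over K v {..<r} \<longrightarrow> (\<forall>w b. real (Gc K r v w b) = Xf q m r w (b = 0))"
proof (induction r)
  case 0
  have v0: "vecs 0 = {(\<lambda>_. 0) :: nat \<Rightarrow> 'a}" by (auto simp: vecs_def fun_eq_iff)
  have r0: "rank_over K 0 u = 0" for u using rank_le[of K 0 u] by simp
  show ?case
  proof (intro allI impI)
    fix v :: "nat \<Rightarrow> 'a" and w b
    have "Gc K 0 v w b = (if w = 0 \<and> b = 0 then 1 else 0)"
      unfolding Gc_def v0 by (simp add: r0 sv_def)
    then show "real (Gc K 0 v w b) = Xf q m 0 w (b = 0)" using X_base[OF q_pos] by simp
  qed
next
  case (Suc r)
  show ?case
  proof (intro allI impI)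
    fix v :: "nat \<Rightarrow> 'a" and w b
    assume v: "lin_indep_over K v {..<Suc r}"
    have vr: "v r \<noteq> 0" using vr_nz[OF sf v] .
    have vind: "lin_indep_over K v {..<r}" using indep_subset[OF sf v] by auto
    have Gv: "\<And>w b. real (Gc K r v w b) = Xf q m r w (b = 0)" using Suc.IH vind by blast
    let ?T = "\<lambda>u'. real (card {t \<in> sp K {..<r} u'. sv r v u' + t * v r = b})"
    let ?V = "\<lambda>w. {u \<in> vecs r. rank_over K r u = w}"
    have finvr: "finite (vecs r :: (nat \<Rightarrow> 'a) set)" by (rule finite_vecs)
    have "Gc K (Suc r) v w b = (\<Sum>u'\<in>vecs r. card {t. rank_over K (Suc r) (u'(r := t)) = w \<and> sv (Suc r) v (u'(r := t)) = b})"
      unfolding Gc_def by (rule card_suc)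
    also have "\<dots> = (\<Sum>u'\<in>vecs r. card {t. rank_over K r u' + (if t \<in> sp K {..<r} u' then 0 else 1) = w \<and> sv r v u' + t * v r = b})"
      by (intro sum.cong refl) (simp add: rank_upd[OF sf] sv_upd)
    finally have "real (Gc K (Suc r) v w b) = (\<Sum>u'\<in>vecs r.
        (if rank_over K r u' = w then ?T u' else 0) + (if rank_over K r u' + 1 = w then 1 - ?T u' else 0))"
      by (simp add: of_nat_sum term_split[where v=v and r=r, OF vr])
    also have "\<dots> = (\<Sum>u'\<in>?V w. ?T u') + (\<Sum>u'\<in>vecs r. if rank_over K r u' + 1 = w then 1 - ?T u' else 0)"
      by (simp add: sum.distrib sum.inter_filter[OF finvr])
    also have "(\<Sum>u'\<in>?V w. ?T u') = real q ^ w * Xf q m r w (b = 0)"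
      using Tsum[OF v] Suc.IH by blast
    also have "(\<Sum>u'\<in>vecs r. if rank_over K r u' + 1 = w then 1 - ?T u' else 0)
        = (if w = 0 then 0 else Nh q m r (w - 1) - real q ^ (w - 1) * Xf q m r (w - 1) (b = 0))"
    proof (cases w)
      case 0 then show ?thesis by simp
    next
      case (Suc k)
      have "(\<Sum>u'\<in>vecs r. if rank_over K r u' + 1 = w then 1 - ?T u' else 0) = (\<Sum>u'\<in>?V k. 1 - ?T u')"
        using Suc by (simp add: sum.inter_filter[OF finvr])
      also have "\<dots> = real (card (?V k)) - (\<Sum>u'\<in>?V k. ?T u')"
        by (simp add: sum_subtractf)
      also have "\<dots> = Nh q m r k - real q ^ k * Xf q m r k (b = 0)"
        using cardV[OF Gv] Tsum[OF v] Suc.IH by presburger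
      finally show ?thesis using Suc by simp
    qed
    finally show "real (Gc K (Suc r) v w b) = Xf q m (Suc r) w (b = 0)"
      using X_rec[OF q_pos] by simp
  qed
qed

end



theorem proposition15:
  fixes K :: "'a::{field,finite} set" and q m r :: nat and v :: "nat \<Rightarrow> 'a"
  assumes "is_subfield K"
    and "card K = q"
    and "card (UNIV :: 'a set) = q ^ m"
    and "r \<le> m"
    and "v \<in> vecs r"
    and "rank_over K r v = r"
  shows "\<forall>x y. rank_wt_enum K r (dual_code r (span1 r v)) x y =
      (real q) powr (- real m) *
        (heval (qpow (real q) (hp_xqy (real q)) r) x y (real m)
         + ((real q) ^ m - 1) * heval (qpow (real q) hp_xmy r) x y (real m))"
proof (intro allI)
  fix x y :: real
  note sf = assms(1) and cK = assms(2) and cU = assms(3)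
  have qpos: "q > 0" using q_pos[OF sf cK cU] .
  have ind: "lin_indep_over K v {..<r}"
  proof -
    obtain S where S: "S \<subseteq> {..<r}" "lin_indep_over K v S" "card S = rank_over K r v"
      using rank_props(1) by blast
    then have "S = {..<r}" using assms(6) by (metis card_lessThan card_subset_eq finite_lessThan)
    then show ?thesis using S(2) by simp
  qed
  let ?C = "dual_code r (span1 r v)"
  have Ceq: "?C = {u \<in> vecs r. sv r v u = 0}"
  proof
    show "?C \<subseteq> {u \<in> vecs r. sv r v u = 0}"
    proof
      fix u assume u: "u \<in> ?C"
      have "v \<in> span1 r v" unfolding span1_def by (rule CollectI, rule exI[of _ 1]) simp
      then show "u \<in> {u \<in> vecs r. sv r v u = 0}" using u by (auto simp: dual_code_def sv_def)
    qed
    show "{u \<in> vecs r. sv r v u = 0} \<subseteq> ?C"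
    proof
      fix u assume u: "u \<in> {u \<in> vecs r. sv r v u = 0}"
      have "(\<Sum>i<r. u i * c i) = 0" if "c \<in> span1 r v" for c
      proof -
        obtain a where c: "c = (\<lambda>i. a * v i)" using \<open>c \<in> span1 r v\<close> unfolding span1_def by blast
        have "(\<Sum>i<r. u i * c i) = a * sv r v u"
          unfolding c sv_def by (simp add: sum_distrib_left mult_ac)
        then show ?thesis using u by simp
      qed
      then show "u \<in> ?C" using u by (simp add: dual_code_def)
    qed
  qed
  have finC: "finite ?C" unfolding Ceq by (rule finite_subset[OF _ finite_vecs[of r]]) auto
  have G: "real (card {u \<in> ?C. rank_over K r u = w}) = Xf q m r w True" for w
  proof -
    have "{u \<in> ?C. rank_over K r u = w} = {u \<in> vecs r. rank_over K r u = w \<and> sv r v u = 0}"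
      unfolding Ceq by auto
    then have "card {u \<in> ?C. rank_over K r u = w} = Gc K r v w 0" by (simp add: Gc_def)
    then show ?thesis using Gc_main[OF sf cK cU] ind by simp
  qed
  have "rank_wt_enum K r ?C x y = (\<Sum>u\<in>?C. y ^ rank_over K r u * x ^ (r - rank_over K r u))"
    by (simp add: rank_wt_enum_def)
  also have "\<dots> = (\<Sum>w\<in>{..r}. \<Sum>u\<in>{u \<in> ?C. rank_over K r u = w}. y ^ rank_over K r u * x ^ (r - rank_over K r u))"
    by (rule sum.group[symmetric, OF finC]) (auto simp: rank_le)
  also have "\<dots> = (\<Sum>w\<in>{..r}. real (card {u \<in> ?C. rank_over K r u = w}) * (y ^ w * x ^ (r - w)))"
    by (intro sum.cong refl) simp
  also have "\<dots> = (\<Sum>w\<in>{..r}. Xf q m r w True * (y ^ w * x ^ (r - w)))"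
    using G by simp
  also have "\<dots> = real q powr (- real m) *
        ((\<Sum>w\<le>r. Nh q m r w * y ^ w * x ^ (r - w))
         + (real q ^ m - 1) * (\<Sum>w\<le>r. Eh q m r w * y ^ w * x ^ (r - w)))"
  proof -
    have pm: "real q powr (- real m) = 1 / real q ^ m"
      using qpos by (simp add: powr_minus powr_realpow divide_inverse)
    let ?Q = "real q ^ m"
    have Qpos: "?Q > 0" using qpos by simp
    have "(\<Sum>w\<in>{..r}. Xf q m r w True * (y ^ w * x ^ (r - w)))
        = (\<Sum>w\<le>r. 1 / ?Q * (Nh q m r w * y ^ w * x ^ (r - w)) + (1 / ?Q * (?Q - 1)) * (Eh q m r w * y ^ w * x ^ (r - w)))"
      using Qpos by (intro sum.cong refl) (simp add: Xf_def field_simps)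
    also have "\<dots> = 1 / ?Q * (\<Sum>w\<le>r. Nh q m r w * y ^ w * x ^ (r - w)) + (1 / ?Q * (?Q - 1)) * (\<Sum>w\<le>r. Eh q m r w * y ^ w * x ^ (r - w))"
      by (simp add: sum.distrib sum_distrib_left)
    also have "\<dots> = 1 / ?Q * ((\<Sum>w\<le>r. Nh q m r w * y ^ w * x ^ (r - w)) + (?Q - 1) * (\<Sum>w\<le>r. Eh q m r w * y ^ w * x ^ (r - w)))"
      by (simp add: distrib_left mult.assoc)
    finally show ?thesis unfolding pm .
  qed
  also have "\<dots> = real q powr (- real m) *
        (heval (qpow (real q) (hp_xqy (real q)) r) x y (real m)
         + (real q ^ m - 1) * heval (qpow (real q) hp_xmy r) x y (real m))"
    by (simp add: heval_def Nh_def Eh_def fst_qpow xqy_props(1) xmy_props(1))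
  finally show "rank_wt_enum K r ?C x y = real q powr (- real m) *
        (heval (qpow (real q) (hp_xqy (real q)) r) x y (real m)
         + (real q ^ m - 1) * heval (qpow (real q) hp_xmy r) x y (real m))" .
qed


end
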